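(* Let $\mu$ be a positive finite Borel measure on $\mathbb{R}^d$ and $0\le\alpha\le d$, and assume $$\liminf_{r\to\infty}\frac{1}{r^{d-\alpha}}\int_{|t|<r}|\widehat{\mu}(t)|^2\,dt>0.$$ Let $\Lambda\subset\mathbb{R}^d$ be countable and suppose $E(\Lambda)$ is a Bessel system in $L^2(\mu)$. Then there is a constant $C$ such that $$\sup_{x\in\mathbb{R}^d}\#\big(\Lambda\cap B(x,r)\big)\le C r^\alpha\quad\text{for all } r\ge 1.$$
   Context: $\widehat{\mu}(t)=\int_{\mathbb{R}^d}e^{-2\pi i\langle t,x\rangle}d\mu(x)$. For $\lambda\in\mathbb{R}^d$, $e_\lambda(x)=e^{2\pi i\langle\lambda,x\rangle}$ and $E(\Lambda)=\{e_\lambda\}_{\lambda\in\Lambda}$. A system $\{f_n\}$ in a Hilbert space $H$ is a Bessel system if there is $C>0$ with $\sum_n|\langle f,f_n\rangle|^2\le C\|f\|^2$ for all $f\in H$. $B(x,r)$ is the open ball of radius $r$ centered at $x$. *)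

theory Defs
  imports "HOL-Analysis.Analysis"
begin

definition fourier_measure :: "'a::euclidean_space measure \<Rightarrow> 'a \<Rightarrow> complex" where
  "fourier_measure \<mu> t = (LINT x|\<mu>. cis (- 2 * pi * (t \<bullet> x)))"

definition expo :: "'a::euclidean_space \<Rightarrow> 'a \<Rightarrow> complex" where
  "expo l x = cis (2 * pi * (l \<bullet> x))"

definition L2 :: "'a measure \<Rightarrow> ('a \<Rightarrow> complex) set" where
  "L2 \<mu> = {f. f \<in> borel_measurable \<mu> \<and> integrable \<mu> (\<lambda>x. (cmod (f x))\<^sup>2)}"

definition L2_inner :: "'a measure \<Rightarrow> ('a \<Rightarrow> complex) \<Rightarrow> ('a \<Rightarrow> complex) \<Rightarrow> complex" where
  "L2_inner \<mu> f g = (LINT x|\<mu>. f x * cnj (g x))"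

definition L2_norm_sq :: "'a measure \<Rightarrow> ('a \<Rightarrow> complex) \<Rightarrow> real" where
  "L2_norm_sq \<mu> f = (LINT x|\<mu>. (cmod (f x))\<^sup>2)"

definition bessel_system :: "'a::euclidean_space measure \<Rightarrow> 'a set \<Rightarrow> bool" where
  "bessel_system \<mu> \<Lambda> \<longleftrightarrow> (\<exists>C>0. \<forall>f\<in>L2 \<mu>.
      (\<Sum>\<^sub>\<infinity>l\<in>\<Lambda>. ennreal ((cmod (L2_inner \<mu> f (expo l)))\<^sup>2)) \<le> ennreal (C * L2_norm_sq \<mu> f))"

end

theory Submission
  imports Defs
begin

lemma nn_integral_reflect:
  fixes h :: "'a::euclidean_space \<Rightarrow> ennreal"
  assumes hm[measurable]: "h \<in> borel_measurable borel"
  shows "(\<integral>\<^sup>+x. h (l - x) \<partial>lborel) = (\<integral>\<^sup>+t. h t \<partial>lborel)"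
proof -
  define T where "T = (\<lambda>x::'a. l + (-1::real) *\<^sub>R x)"
  have Tm[measurable]: "T \<in> borel_measurable borel" unfolding T_def by simp
  have eq: "lborel = density (distr lborel borel T) (\<lambda>_. \<bar>-1::real\<bar>^DIM('a))"
    unfolding T_def by (rule lborel_affine) simp
  have "(\<integral>\<^sup>+t. h t \<partial>lborel) = (\<integral>\<^sup>+t. h t \<partial>density (distr lborel borel T) (\<lambda>_. \<bar>-1::real\<bar>^DIM('a)))"
    by (rule arg_cong[OF eq])
  also have "\<dots> = (\<integral>\<^sup>+t. h t \<partial>distr lborel borel T)"
    by (subst nn_integral_density) auto
  also have "\<dots> = (\<integral>\<^sup>+x. h (T x) \<partial>lborel)"
    by (subst nn_integral_distr) auto
  also have "\<dots> = (\<integral>\<^sup>+x. h (l - x) \<partial>lborel)"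
    unfolding T_def by simp
  finally show ?thesis by simp
qed

lemma expo_L2:
  assumes "sets \<mu> = sets borel" "finite_measure \<mu>"
  shows "expo x \<in> L2 \<mu>"
proof -
  have "expo x \<in> borel_measurable borel"
    unfolding expo_def by (intro borel_measurable_continuous_onI continuous_intros)
  hence m: "expo x \<in> borel_measurable \<mu>"
    using measurable_cong_sets[OF assms(1) refl] by blast
  have "(\<lambda>z. (cmod (expo x z))\<^sup>2) = (\<lambda>_. 1)" by (auto simp: expo_def)
  moreover have "integrable \<mu> (\<lambda>_. 1::real)"
    using finite_measure.integrable_const[OF assms(2)] by blast
  ultimately show ?thesis using m unfolding L2_def by simp
qed

lemma expo_inner:
  "L2_inner \<mu> (expo x) (expo l) = fourier_measure \<mu> (l - x)"
proof -
  have "(\<lambda>z. expo x z * cnj (expo l z)) = (\<lambda>z. cis (- 2 * pi * ((l - x) \<bullet> z)))"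
    by (rule ext) (simp add: expo_def cis_cnj cis_mult inner_diff_left algebra_simps)
  thus ?thesis unfolding L2_inner_def fourier_measure_def by simp
qed

lemma expo_norm:
  "L2_norm_sq \<mu> (expo x) = measure \<mu> (space \<mu>)"
proof -
  have "(\<lambda>z. (cmod (expo x z))\<^sup>2) = (\<lambda>_. 1)" by (auto simp: expo_def)
  thus ?thesis unfolding L2_norm_sq_def by simp
qed

lemma fourier_meas:
  fixes \<mu> :: "'a::euclidean_space measure"
  assumes "sets \<mu> = sets borel" "finite_measure \<mu>"
  shows "fourier_measure \<mu> \<in> borel_measurable borel"
proof -
  have c: "(\<lambda>p::'a\<times>'a. cis (- 2 * pi * (fst p \<bullet> snd p))) \<in> borel_measurable borel"
    by (intro borel_measurable_continuous_onI continuous_intros)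
  have "sets (borel \<Otimes>\<^sub>M \<mu>) = sets (borel \<Otimes>\<^sub>M (borel::'a measure))"
    by (rule sets_pair_measure_cong) (auto simp: assms(1))
  also have "\<dots> = sets (borel :: ('a\<times>'a) measure)" by (simp only: borel_prod)
  finally have ss: "sets (borel \<Otimes>\<^sub>M \<mu>) = sets (borel :: ('a\<times>'a) measure)" .
  have e: "case_prod (\<lambda>t x. cis (- 2 * pi * (t \<bullet> x))) = (\<lambda>p::'a\<times>'a. cis (- 2 * pi * (fst p \<bullet> snd p)))"
    by (rule ext) (simp add: split_beta)
  have "case_prod (\<lambda>t x. cis (- 2 * pi * (t \<bullet> x))) \<in> borel_measurable (borel \<Otimes>\<^sub>M \<mu>)"
    unfolding e using measurable_cong_sets[OF ss refl] c by blast
  hence "(\<lambda>t. \<integral>x. cis (- 2 * pi * (t \<bullet> x)) \<partial>\<mu>) \<in> borel_measurable borel"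
  proof -
    interpret finite_measure \<mu> by fact
    show ?thesis by (rule borel_measurable_lebesgue_integral) fact
  qed
  thus ?thesis unfolding fourier_measure_def[abs_def] by simp
qed


lemma pointwise_bound:
  fixes \<mu> :: "'a::euclidean_space measure"
  assumes "sets \<mu> = sets borel" "finite_measure \<mu>"
    and bes: "\<forall>f\<in>L2 \<mu>. (\<Sum>\<^sub>\<infinity>l\<in>\<Lambda>. ennreal ((cmod (L2_inner \<mu> f (expo l)))\<^sup>2)) \<le> ennreal (C * L2_norm_sq \<mu> f)"
    and F: "finite F" "F \<subseteq> \<Lambda>"
  shows "(\<Sum>l\<in>F. ennreal ((cmod (fourier_measure \<mu> (l - x)))\<^sup>2)) \<le> ennreal (C * measure \<mu> (space \<mu>))"
proof -
  have "(\<Sum>l\<in>F. ennreal ((cmod (fourier_measure \<mu> (l - x)))\<^sup>2))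
      = (\<Sum>\<^sub>\<infinity>l\<in>F. ennreal ((cmod (fourier_measure \<mu> (l - x)))\<^sup>2))" using F by simp
  also have "\<dots> \<le> (\<Sum>\<^sub>\<infinity>l\<in>\<Lambda>. ennreal ((cmod (fourier_measure \<mu> (l - x)))\<^sup>2))"
    using F by (intro infsum_mono_neutral nonneg_summable_on_complete) auto
  also have "\<dots> = (\<Sum>\<^sub>\<infinity>l\<in>\<Lambda>. ennreal ((cmod (L2_inner \<mu> (expo x) (expo l)))\<^sup>2))"
    by (simp add: expo_inner)
  also have "\<dots> \<le> ennreal (C * L2_norm_sq \<mu> (expo x))"
    using bes expo_L2[OF assms(1,2)] by blast
  finally show ?thesis by (simp add: expo_norm)
qed

lemma key_bound:
  fixes g :: "'a::euclidean_space \<Rightarrow> real"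
  assumes gm[measurable]: "g \<in> borel_measurable borel" and gnn: "\<And>t. g t \<ge> 0"
    and pt: "\<And>x. (\<Sum>l\<in>F. ennreal (g (l - x))) \<le> ennreal K" and K: "K \<ge> 0"
    and F: "finite F" "F \<subseteq> ball y r"
    and int: "set_integrable lborel (ball 0 r) g"
  shows "real (card F) * (LINT t:ball 0 r|lborel. g t) \<le> K * measure lborel (ball y (2*r))"
proof -
  define I where "I = (LINT t:ball 0 r|lborel. g t)"
  define B where "B = ball y (2*r)"
  have Bm[measurable]: "B \<in> sets lborel" unfolding B_def by simp
  have I_nn: "ennreal I = (\<integral>\<^sup>+t. ennreal (indicator (ball 0 r) t * g t) \<partial>lborel)"
    unfolding I_def set_lebesgue_integral_def
    using int unfolding set_integrable_def
    by (subst nn_integral_eq_integral) (auto simp: gnn)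
  have hm: "(\<lambda>t. ennreal (indicator (ball 0 r) t * g t)) \<in> borel_measurable borel"
    by (intro measurable_compose[OF _ measurable_ennreal] borel_measurable_times borel_measurable_indicator gm) simp
  have I0: "I \<ge> 0" unfolding I_def set_lebesgue_integral_def
    by (intro integral_nonneg_AE AE_I2) (auto simp: gnn)
  have "ennreal (real (card F) * I) = (\<Sum>l\<in>F. ennreal I)"
    using I0 by (simp add: ennreal_mult ennreal_of_nat_eq_real_of_nat)
  also have "\<dots> = (\<Sum>l\<in>F. \<integral>\<^sup>+x. ennreal (indicator (ball 0 r) (l - x) * g (l - x)) \<partial>lborel)"
    unfolding I_nn
    by (intro sum.cong refl nn_integral_reflect[symmetric] hm)
  also have "\<dots> \<le> (\<Sum>l\<in>F. \<integral>\<^sup>+x. ennreal (indicator B x * g (l - x)) \<partial>lborel)"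
  proof (intro sum_mono nn_integral_mono)
    fix l x assume l: "l \<in> F"
    show "ennreal (indicator (ball 0 r) (l - x) * g (l - x)) \<le> ennreal (indicator B x * g (l - x))"
    proof (cases "l - x \<in> ball 0 r")
      case True
      have "dist y l < r" using l F by auto
      moreover have "dist l x < r" using True by (simp add: dist_norm norm_minus_commute)
      ultimately have "dist y x < 2 * r" using dist_triangle[of y x l] by linarith
      hence "x \<in> B" unfolding B_def by simp
      thus ?thesis using True by simp
    next
      case False
      thus ?thesis using gnn by (simp add: indicator_def)
    qed
  qed
  also have "\<dots> = (\<integral>\<^sup>+x. (\<Sum>l\<in>F. ennreal (indicator B x * g (l - x))) \<partial>lborel)"
  proof (rule nn_integral_sum[symmetric])
    fix l :: 'a
    have "(\<lambda>x::'a. l - x) \<in> borel_measurable lborel" by simp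
    hence "(\<lambda>x. g (l - x)) \<in> borel_measurable lborel"
      using measurable_compose[OF _ gm] by (simp add: measurable_lborel1)
    thus "(\<lambda>x. ennreal (indicator B x * g (l - x))) \<in> borel_measurable lborel"
      by (intro measurable_compose[OF _ measurable_ennreal] borel_measurable_times borel_measurable_indicator Bm)
  qed
  also have "\<dots> \<le> (\<integral>\<^sup>+x. ennreal K * indicator B x \<partial>lborel)"
  proof (intro nn_integral_mono)
    fix x
    show "(\<Sum>l\<in>F. ennreal (indicator B x * g (l - x))) \<le> ennreal K * indicator B x"
      using pt[of x] by (cases "x \<in> B") auto
  qed
  also have "\<dots> = ennreal K * emeasure lborel B"
    by (rule nn_integral_cmult_indicator) (simp add: B_def)
  also have "\<dots> = ennreal (K * measure lborel B)"
    using emeasure_lborel_ball_finite[of y "2*r"] unfolding B_def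
    by (simp add: emeasure_eq_ennreal_measure ennreal_mult K)
  finally have "ennreal (real (card F) * I) \<le> ennreal (K * measure lborel B)" .
  hence "real (card F) * I \<le> K * measure lborel B"
    using K by (subst (asm) ennreal_le_iff) auto
  thus ?thesis unfolding I_def B_def .
qed


theorem lemma3p1:
  fixes \<mu> :: "'a::euclidean_space measure" and \<alpha> :: real and \<Lambda> :: "'a set"
  assumes "sets \<mu> = sets borel"
    and "finite_measure \<mu>"
    and "0 \<le> \<alpha>" and "\<alpha> \<le> real DIM('a)"
    and "Liminf at_top (\<lambda>r::real. ereal ((LINT t:ball 0 r|lborel. (cmod (fourier_measure \<mu> t))\<^sup>2)
                                         / r powr (real DIM('a) - \<alpha>))) > 0"
    and "countable \<Lambda>"
    and "bessel_system \<mu> \<Lambda>"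
  shows "\<exists>C. \<forall>r\<ge>1. \<forall>x. finite (\<Lambda> \<inter> ball x r) \<and> real (card (\<Lambda> \<inter> ball x r)) \<le> C * r powr \<alpha>"
proof -
  obtain C0 where C0: "C0 > 0" and bes: "\<forall>f\<in>L2 \<mu>.
      (\<Sum>\<^sub>\<infinity>l\<in>\<Lambda>. ennreal ((cmod (L2_inner \<mu> f (expo l)))\<^sup>2)) \<le> ennreal (C0 * L2_norm_sq \<mu> f)"
    using assms(7) unfolding bessel_system_def by blast
  define M where "M = measure \<mu> (space \<mu>)"
  define g where "g = (\<lambda>t. (cmod (fourier_measure \<mu> t))\<^sup>2)"
  define d where "d = real DIM('a)"
  define I where "I r = (LINT t:ball 0 r|lborel. g t)" for r
  have fm[measurable]: "fourier_measure \<mu> \<in> borel_measurable borel"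
    using fourier_meas[OF assms(1,2)] .
  have gm: "g \<in> borel_measurable borel" unfolding g_def by measurable
  have gnn: "\<And>t. g t \<ge> 0" unfolding g_def by simp
  have M0: "M \<ge> 0" unfolding M_def by simp
  have K0: "C0 * M \<ge> 0" using C0 M0 by simp
  have key2: "real (card F) * I r \<le> C0 * M * measure lborel (ball y (2*r))"
    if "finite F" "F \<subseteq> \<Lambda> \<inter> ball y r" "set_integrable lborel (ball 0 r) g" for F y r
  proof -
    have pt: "(\<Sum>l\<in>F. ennreal (g (l - x))) \<le> ennreal (C0 * M)" for x
      unfolding g_def M_def
      by (rule pointwise_bound[OF assms(1,2) bes]) (use that in auto)
    show ?thesis unfolding I_def
      by (rule key_bound[OF gm gnn pt K0]) (use that in auto)
  qed
  obtain z where z: "0 < ereal z" "ereal z < Liminf at_top (\<lambda>r::real. ereal ((LINT t:ball 0 r|lborel. (cmod (fourier_measure \<mu> t))\<^sup>2)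
                                         / r powr (real DIM('a) - \<alpha>)))"
    using ereal_dense2[OF assms(5)] by blast
  have z0: "z > 0" using z(1) by simp
  have "eventually (\<lambda>r. ereal z < ereal ((LINT t:ball 0 r|lborel. (cmod (fourier_measure \<mu> t))\<^sup>2)
                                         / r powr (real DIM('a) - \<alpha>))) at_top"
    using less_LiminfD[OF z(2)] .
  then obtain R0 where R0: "\<And>r. r \<ge> R0 \<Longrightarrow> z < I r / r powr (d - \<alpha>)"
    unfolding eventually_at_top_linorder I_def g_def d_def by auto
  define R where "R = max R0 1"
  have R1: "R \<ge> 1" unfolding R_def by simp
  have big: "z * r powr (d - \<alpha>) < I r" if "r \<ge> R" for r
  proof -
    have "r > 0" using that R1 by simp
    hence "r powr (d - \<alpha>) > 0" by simp
    moreover have "z < I r / r powr (d - \<alpha>)" using R0[of r] that unfolding R_def by simp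
    ultimately show ?thesis by (simp add: pos_less_divide_eq)
  qed
  have Ipos: "I r > 0" if "r \<ge> R" for r
  proof -
    have "r > 0" using that R1 by simp
    hence "z * r powr (d - \<alpha>) > 0" using z0 by simp
    thus ?thesis using big[OF that] by simp
  qed
  have sint: "set_integrable lborel (ball 0 r) g" if "r \<ge> R" for r
  proof (rule ccontr)
    assume "\<not> set_integrable lborel (ball 0 r) g"
    hence "I r = 0" unfolding I_def set_integrable_def set_lebesgue_integral_def
      by (simp add: not_integrable_integral_eq)
    thus False using Ipos[OF that] by simp
  qed
  define V where "V = measure lborel (ball (0::'a) 1)"
  define K where "K = C0 * M * 2 ^ DIM('a) * V / z"
  have V0: "V \<ge> 0" unfolding V_def by simp
  have Kn: "K \<ge> 0" unfolding K_def using K0 V0 z0 by simp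
  have boundF: "real (card F) \<le> K * r powr \<alpha>"
    if r: "r \<ge> R" and F: "finite F" "F \<subseteq> \<Lambda> \<inter> ball y r" for F y r
  proof -
    have rp: "r > 0" using r R1 by simp
    define P where "P = r powr (d - \<alpha>)"
    have P0: "P > 0" unfolding P_def using rp by simp
    have "P * r powr \<alpha> = r powr (d - \<alpha> + \<alpha>)" unfolding P_def by (rule powr_add[symmetric])
    also have "\<dots> = r powr d" by simp
    also have "\<dots> = r ^ DIM('a)" unfolding d_def using rp by (rule powr_realpow)
    finally have rd: "r ^ DIM('a) = P * r powr \<alpha>" by simp
    have "measure lborel (ball y (2*r)) = (2*r) ^ DIM('a) * V"
      unfolding V_def using rp by (intro content_ball_conv_unit_ball) simp
    also have "\<dots> = 2 ^ DIM('a) * V * P * r powr \<alpha>"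
      by (simp add: power_mult_distrib rd mult_ac)
    finally have ms: "measure lborel (ball y (2*r)) = 2 ^ DIM('a) * V * P * r powr \<alpha>" .
    have "real (card F) * (z * P) \<le> real (card F) * I r"
      using big[OF r] unfolding P_def by (intro mult_left_mono) auto
    also have "\<dots> \<le> C0 * M * (2 ^ DIM('a) * V * P * r powr \<alpha>)"
      using key2[OF F sint[OF r]] ms by simp
    also have "\<dots> = (K * z) * (P * r powr \<alpha>)"
      unfolding K_def using z0 by simp
    also have "\<dots> = (K * r powr \<alpha>) * (z * P)" by (simp only: ac_simps)
    finally have "real (card F) * (z * P) \<le> (K * r powr \<alpha>) * (z * P)" .
    thus ?thesis by (rule mult_right_le_imp_le) (use z0 P0 in simp)
  qed
  have fin_bound: "finite (\<Lambda> \<inter> ball y r) \<and> real (card (\<Lambda> \<inter> ball y r)) \<le> K * r powr \<alpha>"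
    if r: "r \<ge> R" for y r
  proof -
    have fin: "finite (\<Lambda> \<inter> ball y r)"
    proof (rule ccontr)
      assume inf: "infinite (\<Lambda> \<inter> ball y r)"
      obtain F where F': "finite F" "card F = nat \<lceil>K * r powr \<alpha>\<rceil> + 1" "F \<subseteq> \<Lambda> \<inter> ball y r"
        using infinite_arbitrarily_large[OF inf] by blast
      hence F: "finite F" "F \<subseteq> \<Lambda> \<inter> ball y r" "card F = nat \<lceil>K * r powr \<alpha>\<rceil> + 1" by auto
      have "real (card F) > K * r powr \<alpha>" using F(3) by linarith
      thus False using boundF[OF r F(1,2)] by simp
    qed
    thus ?thesis using boundF[OF r fin, of y] by simp
  qed
  show ?thesis
  proof (intro exI[of _ "K * R powr \<alpha>"] allI impI)
    fix r :: real and x :: 'a assume r1: "r \<ge> 1"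
    have Ra: "R powr \<alpha> \<ge> 1" using R1 assms(3) by (simp add: ge_one_powr_ge_zero)
    have ra: "r powr \<alpha> \<ge> 1" using r1 assms(3) by (simp add: ge_one_powr_ge_zero)
    show "finite (\<Lambda> \<inter> ball x r) \<and> real (card (\<Lambda> \<inter> ball x r)) \<le> K * R powr \<alpha> * r powr \<alpha>"
    proof (cases "r \<ge> R")
      case True
      have "K * r powr \<alpha> * 1 \<le> K * r powr \<alpha> * R powr \<alpha>"
        by (rule mult_left_mono) (use Kn Ra in auto)
      hence "K * r powr \<alpha> \<le> K * R powr \<alpha> * r powr \<alpha>" by (simp add: mult_ac)
      thus ?thesis using fin_bound[OF True, of x] by simp
    next
      case False
      have sub: "\<Lambda> \<inter> ball x r \<subseteq> \<Lambda> \<inter> ball x R" using False by auto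
      have fR: "finite (\<Lambda> \<inter> ball x R) \<and> real (card (\<Lambda> \<inter> ball x R)) \<le> K * R powr \<alpha>"
        using fin_bound[of R x] by simp
      hence fr: "finite (\<Lambda> \<inter> ball x r)" using sub finite_subset by blast
      have "card (\<Lambda> \<inter> ball x r) \<le> card (\<Lambda> \<inter> ball x R)" using sub fR card_mono by blast
      moreover have "K * R powr \<alpha> * 1 \<le> K * R powr \<alpha> * r powr \<alpha>"
        by (rule mult_left_mono) (use Kn ra in auto)
      ultimately show ?thesis using fR fr by linarith
    qed
  qed
qed

end
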